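(* Let $\varrho,\sigma$ be density operators on a finite-dimensional Hilbert space $\mathcal H$ and $\alpha\in(0,1)$. Then \[ \limsup_{n\to\infty}\frac1nD_\alpha^{\mathrm{test}}(\varrho^{\otimes n}\|\sigma^{\otimes n})=\limsup_{n\to\infty}-\frac1n\log\min_{0\le T\le I}\Big\{\big(\operatorname{Tr}\varrho^{\otimes n}(I-T)\big)^{\frac{\alpha}{1-\alpha}}+\operatorname{Tr}\sigma^{\otimes n}T\Big\}, \] and the same equality holds with $\liminf$ in place of $\limsup$ on both sides (the minima being over operators $T$ on $\mathcal H^{\otimes n}$ with $0\le T\le I$). In particular, the limit on the left exists if and only if the limit on the right exists, in which case they are equal.
   Context: For probability vectors $p,q$ and $\alpha\in(0,1)$, $D_\alpha(p\|q)=\frac{1}{\alpha-1}\log\sum_x p(x)^\alpha q(x)^{1-\alpha}$. A test is an operator $0\le T\le I$; $\mathcal T(X):=(\operatorname{Tr}XT,\operatorname{Tr}X(I-T))$; $D_\alpha^{\mathrm{test}}(\varrho\|\sigma):=\max_{0\le T\le I}D_\alpha(\mathcal T(\varrho)\|\mathcal T(\sigma))$. *)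

theory Defs
  imports "HOL-Library.Extended_Real" "HOL-Library.Liminf_Limsup"
    "Jordan_Normal_Form.Jordan_Normal_Form" "Jordan_Normal_Form.Schur_Decomposition"
begin

text \<open>Operators on an n-dimensional Hilbert space = complex n x n matrices.\<close>

definition mtrace :: "complex mat \<Rightarrow> complex" where
  "mtrace A = (\<Sum>i<dim_row A. A $$ (i, i))"

definition psd :: "nat \<Rightarrow> complex mat \<Rightarrow> bool" where
  "psd n A \<longleftrightarrow> A \<in> carrier_mat n n \<and> A = mat_adjoint A \<and>
     (\<forall>v \<in> carrier_vec n. (A *\<^sub>v v) \<bullet>c v \<in> \<real> \<and> 0 \<le> Re ((A *\<^sub>v v) \<bullet>c v))"

definition density :: "nat \<Rightarrow> complex mat \<Rightarrow> bool" where
  "density n A \<longleftrightarrow> psd n A \<and> mtrace A = 1"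

definition is_test :: "nat \<Rightarrow> complex mat \<Rightarrow> bool" where
  "is_test n T \<longleftrightarrow> psd n T \<and> psd n (1\<^sub>m n - T)"

definition kron :: "complex mat \<Rightarrow> complex mat \<Rightarrow> complex mat" where
  "kron A B = mat (dim_row A * dim_row B) (dim_col A * dim_col B)
     (\<lambda>(i, j). A $$ (i div dim_row B, j div dim_col B) * B $$ (i mod dim_row B, j mod dim_col B))"

fun tpow :: "complex mat \<Rightarrow> nat \<Rightarrow> complex mat" where
  "tpow A 0 = 1\<^sub>m 1"
| "tpow A (Suc n) = kron (tpow A n) A"

definition renyi :: "real \<Rightarrow> ('x::finite \<Rightarrow> real) \<Rightarrow> ('x \<Rightarrow> real) \<Rightarrow> ereal" where
  "renyi \<alpha> p q = (let s = (\<Sum>x\<in>UNIV. p x powr \<alpha> * q x powr (1 - \<alpha>)) in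
      if s = 0 then \<infinity> else ereal (ln s / (\<alpha> - 1)))"

text \<open>Test channel: X \<mapsto> (Tr X T, Tr X (I - T)); True indexes the first outcome.\<close>
definition test_map :: "nat \<Rightarrow> complex mat \<Rightarrow> complex mat \<Rightarrow> bool \<Rightarrow> real" where
  "test_map n T X = (\<lambda>b. if b then Re (mtrace (X * T)) else Re (mtrace (X * (1\<^sub>m n - T))))"

text \<open>Test-measured Renyi divergence (the maximum is attained, so it equals the supremum).\<close>
definition D_test :: "real \<Rightarrow> nat \<Rightarrow> complex mat \<Rightarrow> complex mat \<Rightarrow> ereal" where
  "D_test \<alpha> n \<rho> \<sigma> = (SUP T\<in>{T. is_test n T}. renyi \<alpha> (test_map n T \<rho>) (test_map n T \<sigma>))"

text \<open>min over tests of (Tr \<rho>(I-T))^(\<alpha>/(1-\<alpha>)) + Tr \<sigma>T (attained, so equals the infimum).\<close>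
definition err_min :: "real \<Rightarrow> nat \<Rightarrow> complex mat \<Rightarrow> complex mat \<Rightarrow> real" where
  "err_min \<alpha> n \<rho> \<sigma> = (INF T\<in>{T. is_test n T}.
      Re (mtrace (\<rho> * (1\<^sub>m n - T))) powr (\<alpha> / (1 - \<alpha>)) + Re (mtrace (\<sigma> * T)))"

definition neg_log :: "real \<Rightarrow> ereal" where
  "neg_log x = (if x = 0 then \<infinity> else ereal (- ln x))"

end

theory Submission
  imports Defs "HOL-Analysis.Extended_Real_Limits"
begin


lemma powr_le_one_base: fixes t r :: real
  assumes "0 \<le> t" "t \<le> 1" "0 \<le> r" shows "t powr r \<le> 1"
  using assms by (intro powr_le1) auto

lemma half_powr_ge: fixes r :: real assumes "0 \<le> r" "r \<le> 1"
  shows "1/2 \<le> (1/2::real) powr r"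
proof -
  have "(1/2::real) powr 1 \<le> (1/2) powr r"
    using assms by (intro powr_mono') auto
  thus ?thesis by simp
qed

lemma sum_powr_le: fixes u v r :: real
  assumes "0 \<le> u" "0 \<le> v" "0 < r" "r \<le> 1"
  shows "(u + v) powr r \<le> 2 * (u powr r + v powr r)"
proof -
  have "(u + v) powr r \<le> (2 * max u v) powr r"
    using assms by (intro powr_mono2) auto
  also have "\<dots> = 2 powr r * max u v powr r"
    using assms by (simp add: powr_mult)
  also have "\<dots> \<le> 2 * (u powr r + v powr r)"
  proof (rule mult_mono)
    have "2 powr r \<le> (2::real) powr 1" using assms by (intro powr_mono) auto
    thus "2 powr r \<le> (2::real)" by simp
    show "max u v powr r \<le> u powr r + v powr r"
      using assms by (cases "u \<le> v") (auto simp: max_def)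
  qed auto
  finally show ?thesis .
qed

lemma upper_s:
  fixes x y a :: real
  assumes "0 \<le> x" "x \<le> 1" "0 \<le> y" "y \<le> 1" "0 < a" "a < 1"
  shows "(1 - x) powr a * y powr (1 - a) + x powr a * (1 - y) powr (1 - a)
         \<le> 2 * (x powr (a / (1 - a)) + y) powr (1 - a)"
proof -
  let ?e = "x powr (a / (1 - a)) + y"
  have xa: "x powr a = (x powr (a / (1 - a))) powr (1 - a)"
    using assms by (simp add: powr_powr)
  have "(1 - x) powr a * y powr (1 - a) \<le> y powr (1 - a)"
    using assms by (intro mult_left_le_one_le) (auto intro: powr_le_one_base)
  moreover have "x powr a * (1 - y) powr (1 - a) \<le> x powr a"
    using assms by (intro mult_right_le_one_le) (auto intro: powr_le_one_base)
  moreover have "y powr (1 - a) \<le> ?e powr (1 - a)"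
    using assms by (intro powr_mono2) auto
  moreover have "x powr a \<le> ?e powr (1 - a)"
    unfolding xa using assms by (intro powr_mono2) auto
  ultimately show ?thesis by linarith
qed

lemma lower_s_small:
  fixes x y a :: real
  assumes "0 \<le> x" "x \<le> 1/2" "0 \<le> y" "y \<le> 1/2" "0 < a" "a < 1"
  shows "(1/4) * (x powr (a / (1 - a)) + y) powr (1 - a) \<le>
    (1 - x) powr a * y powr (1 - a) + x powr a * (1 - y) powr (1 - a)"
proof -
  have xa: "x powr a = (x powr (a / (1 - a))) powr (1 - a)"
    using assms by (simp add: powr_powr)
  have h1: "1/2 \<le> (1 - x) powr a"
    using half_powr_ge[of a] assms powr_mono2[of a "1/2" "1-x"] by auto
  have h2: "1/2 \<le> (1 - y) powr (1 - a)"
    using half_powr_ge[of "1-a"] assms powr_mono2[of "1-a" "1/2" "1-y"] by auto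
  have "(1/2) * y powr (1 - a) \<le> (1 - x) powr a * y powr (1 - a)"
    using h1 by (intro mult_right_mono) auto
  moreover have "(1/2) * x powr a \<le> x powr a * (1 - y) powr (1 - a)"
    using h2 by (subst mult.commute) (intro mult_right_mono, auto)
  moreover have "(x powr (a / (1 - a)) + y) powr (1 - a) \<le> 2 * (x powr a + y powr (1 - a))"
    unfolding xa using assms by (intro sum_powr_le) auto
  ultimately show ?thesis by argo
qed

lemma e_le2: fixes x y a :: real
  assumes "0 \<le> x" "x \<le> 1" "0 \<le> y" "y \<le> 1" "0 < a" "a < 1"
  shows "(x powr (a / (1 - a)) + y) powr (1 - a) \<le> 2"
proof -
  have "x powr (a / (1 - a)) \<le> 1" using assms by (intro powr_le_one_base) auto
  hence "(x powr (a / (1 - a)) + y) powr (1 - a) \<le> 2 powr (1 - a)"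
    using assms by (intro powr_mono2) auto
  also have "\<dots> \<le> 2 powr 1" using assms by (intro powr_mono) auto
  finally show ?thesis by simp
qed

lemma half_prod: fixes a :: real shows "(1/2::real) powr a * (1/2) powr (1 - a) = 1/2"
  by (simp add: powr_add[symmetric])

lemma lower_s:
  fixes x y a :: real
  assumes "0 \<le> x" "x \<le> 1" "0 \<le> y" "y \<le> 1" "0 < a" "a < 1"
  shows "(1/4) * min (x powr (a / (1 - a)) + y) ((1 - x) powr (a / (1 - a)) + (1 - y)) powr (1 - a) \<le>
    (1 - x) powr a * y powr (1 - a) + x powr a * (1 - y) powr (1 - a)"
    (is "?m \<le> ?s")
proof -
  let ?e1 = "x powr (a / (1 - a)) + y" and ?e2 = "(1 - x) powr (a / (1 - a)) + (1 - y)"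
  have e1: "0 \<le> ?e1" and e2: "0 \<le> ?e2" using assms by auto
  have m1: "?m \<le> (1/4) * ?e1 powr (1 - a)"
    using e1 e2 assms by (auto intro!: powr_mono2 simp: min_def)
  have m2: "?m \<le> (1/4) * ?e2 powr (1 - a)"
    using e1 e2 assms by (auto intro!: powr_mono2 simp: min_def)
  have t1: "0 \<le> (1 - x) powr a * y powr (1 - a)" and t2: "0 \<le> x powr a * (1 - y) powr (1 - a)"
    by auto
  show ?thesis
  proof (cases "x \<le> 1/2")
    case True
    show ?thesis
    proof (cases "y \<le> 1/2")
      case True
      with \<open>x \<le> 1/2\<close> assms have "(1/4) * ?e1 powr (1 - a) \<le> ?s" by (intro lower_s_small) auto
      with m1 show ?thesis by linarith
    next
      case False
      have "(1/2::real) powr a * (1/2) powr (1 - a) \<le> (1 - x) powr a * y powr (1 - a)"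
        using assms True False by (intro mult_mono powr_mono2) auto
      hence "1/2 \<le> (1 - x) powr a * y powr (1 - a)" by (simp add: half_prod)
      moreover have "?e1 powr (1 - a) \<le> 2" using assms by (intro e_le2) auto
      ultimately show ?thesis using m1 t2 by linarith
    qed
  next
    case False
    show ?thesis
    proof (cases "y \<le> 1/2")
      case True
      have "(1/2::real) powr a * (1/2) powr (1 - a) \<le> x powr a * (1 - y) powr (1 - a)"
        using assms True False by (intro mult_mono powr_mono2) auto
      hence "1/2 \<le> x powr a * (1 - y) powr (1 - a)" by (simp add: half_prod)
      moreover have "?e1 powr (1 - a) \<le> 2" using assms by (intro e_le2) auto
      ultimately show ?thesis using m1 t1 by linarith
    next
      case F2: False
      have "(1/4) * ?e2 powr (1 - a) \<le>
        (1 - (1 - x)) powr a * (1 - y) powr (1 - a) + (1 - x) powr a * (1 - (1 - y)) powr (1 - a)"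
        using assms False F2 by (intro lower_s_small) auto
      with m2 show ?thesis by simp
    qed
  qed
qed

lemma divneg1: fixes k L v :: real assumes "0 < k" shows "L / (- k) \<le> v \<longleftrightarrow> - (v * k) \<le> L"
  using assms by (simp add: field_simps, arith)
lemma divneg2: fixes k L u :: real assumes "0 < k" shows "u \<le> L / (- k) \<longleftrightarrow> L \<le> - (u * k)"
  using assms by (simp add: field_simps, arith)
lemma hA: fixes k L c z :: real assumes "0 < k" "- c + k * z \<le> L" shows "L / (- k) \<le> c / k - z"
proof -
  have "(c / k - z) * k = c - z * k" using assms by (simp add: field_simps)
  thus ?thesis using assms by (subst divneg1) (auto simp: algebra_simps)
qed
lemma hB: fixes k L c B :: real assumes "0 < k" "L \<le> c + k * (- (B + c / k))" shows "B \<le> L / (- k)"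
proof -
  have "k * (- (B + c / k)) = - (B * k) - c" using assms by (simp add: field_simps)
  thus ?thesis using assms by (subst divneg2) (auto simp: algebra_simps)
qed
lemma hC: fixes k L c z :: real assumes "0 < k" "L \<le> c + k * (z + 1)" shows "- z - (c / k + 1) \<le> L / (- k)"
proof -
  have "(- z - (c / k + 1)) * k = - z * k - c - k" using assms by (simp add: field_simps)
  thus ?thesis using assms by (subst divneg2) (auto simp: algebra_simps)
qed
lemma am1: fixes a :: real shows "a - 1 = - (1 - a)" by simp

lemma abstract_bound:
  fixes I :: "'t set" and x y :: "'t \<Rightarrow> real" and c :: "'t \<Rightarrow> 't" and a :: real
  assumes ne: "I \<noteq> {}"
   and rng: "\<And>T. T \<in> I \<Longrightarrow> 0 \<le> x T \<and> x T \<le> 1 \<and> 0 \<le> y T \<and> y T \<le> 1"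
   and cmp: "\<And>T. T \<in> I \<Longrightarrow> c T \<in> I \<and> x (c T) = 1 - x T \<and> y (c T) = 1 - y T"
   and a: "0 < a" "a < 1"
  defines "r \<equiv> \<lambda>T. (let s = (1 - x T) powr a * y T powr (1 - a) + x T powr a * (1 - y T) powr (1 - a)
      in if s = 0 then \<infinity> else ereal (ln s / (a - 1)))"
   and "E \<equiv> (INF T\<in>I. x T powr (a / (1 - a)) + y T)"
   and "C \<equiv> (ln 4 + ln 2) / (1 - a) + 1"
  shows "(SUP T\<in>I. r T) \<le> neg_log E + ereal C \<and> neg_log E \<le> (SUP T\<in>I. r T) + ereal C"
proof -
  define e where "e T = x T powr (a / (1 - a)) + y T" for T
  define s where "s T = (1 - x T) powr a * y T powr (1 - a) + x T powr a * (1 - y T) powr (1 - a)" for T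
  have rT: "r T = (if s T = 0 then \<infinity> else ereal (ln (s T) / (a - 1)))" for T
    unfolding r_def s_def Let_def by simp
  have E: "E = (INF T\<in>I. e T)" unfolding E_def e_def by simp
  have e0: "0 \<le> e T" if "T \<in> I" for T using rng[OF that] unfolding e_def by auto
  have s0: "0 \<le> s T" if "T \<in> I" for T using rng[OF that] unfolding s_def by auto
  have bdd: "bdd_below (e ` I)" using e0 by (intro bdd_belowI[of _ 0]) auto
  have EleT: "E \<le> e T" if "T \<in> I" for T unfolding E using bdd that by (rule cINF_lower)
  have E0: "0 \<le> E" unfolding E using ne e0 by (intro cINF_greatest) auto
  have sup_ge: "r T \<le> (SUP T\<in>I. r T)" if "T \<in> I" for T using that by (rule SUP_upper)
  have sU: "s T \<le> 2 * e T powr (1 - a)" if "T \<in> I" for T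
    using rng[OF that] a unfolding s_def e_def by (intro upper_s) auto
  have sL: "(1/4) * E powr (1 - a) \<le> s T" if "T \<in> I" for T
  proof -
    have "(1/4) * min (e T) (e (c T)) powr (1 - a) \<le> s T"
      using rng[OF that] cmp[OF that] a unfolding s_def e_def by (intro lower_s[THEN order.trans[rotated]]) auto
    moreover have "E \<le> min (e T) (e (c T))" using EleT that cmp[OF that] by auto
    hence "E powr (1 - a) \<le> min (e T) (e (c T)) powr (1 - a)" using E0 a by (intro powr_mono2) auto
    ultimately show ?thesis by linarith
  qed
  have C1: "ln 4 / (1 - a) \<le> C" and C2: "ln 2 / (1 - a) + 1 \<le> C"
    using a unfolding C_def by (auto simp: divide_simps)
  have part1: "(SUP T\<in>I. r T) \<le> neg_log E + ereal C"
  proof (cases "E = 0")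
    case True thus ?thesis by (simp add: neg_log_def)
  next
    case False
    hence Ep: "0 < E" using E0 by auto
    show ?thesis
    proof (rule SUP_least)
      fix T assume T: "T \<in> I"
      have sp: "0 < (1/4) * E powr (1 - a)" using Ep by simp
      with sL[OF T] have spos: "0 < s T" by linarith
      have "ln ((1/4) * E powr (1 - a)) \<le> ln (s T)" using sp sL[OF T] spos by (subst ln_le_cancel_iff) auto
      hence "- ln 4 + (1 - a) * ln E \<le> ln (s T)" using Ep by (simp add: ln_mult ln_powr ln_div)
      hence "ln (s T) / (a - 1) \<le> ln 4 / (1 - a) - ln E" using a
        unfolding am1 by (intro hA) auto
      hence "ln (s T) / (a - 1) \<le> - ln E + C" using C1 by linarith
      thus "r T \<le> neg_log E + ereal C" using spos False by (simp add: rT neg_log_def)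
    qed
  qed
  have part2: "neg_log E \<le> (SUP T\<in>I. r T) + ereal C"
  proof (cases "E = 0")
    case True
    have "(SUP T\<in>I. r T) = \<infinity>"
    proof (rule ereal_top)
      fix B
      have "E < exp (- (B + ln 2 / (1 - a)))" using True by simp
      then obtain T where T: "T \<in> I" and eT: "e T < exp (- (B + ln 2 / (1 - a)))"
        using cINF_less_iff[OF ne bdd] unfolding E by blast
      have "ereal B \<le> r T"
      proof (cases "s T = 0")
        case True thus ?thesis by (simp add: rT)
      next
        case False
        hence spos: "0 < s T" using s0[OF T] by linarith
        have epos: "0 < e T"
        proof (rule ccontr)
          assume "\<not> 0 < e T" hence "e T = 0" using e0[OF T] by linarith
          hence "s T \<le> 0" using sU[OF T] a by simp
          thus False using spos by linarith
        qed
        have "ln (s T) \<le> ln (2 * e T powr (1 - a))" using sU[OF T] spos by (subst ln_le_cancel_iff) auto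
        also have "\<dots> = ln 2 + (1 - a) * ln (e T)" using epos by (simp add: ln_mult ln_powr)
        also have "(1 - a) * ln (e T) \<le> (1 - a) * (- (B + ln 2 / (1 - a)))"
        proof -
          have "ln (e T) < ln (exp (- (B + ln 2 / (1 - a))))" using eT epos by (subst ln_less_cancel_iff) auto
          thus ?thesis using a by (intro mult_left_mono) auto
        qed
        finally have "ln (s T) \<le> ln 2 + (1 - a) * (- (B + ln 2 / (1 - a)))" by simp
        hence "B \<le> ln (s T) / (a - 1)" using a unfolding am1 by (intro hB) auto
        thus ?thesis using False by (simp add: rT)
      qed
      also have "\<dots> \<le> (SUP T\<in>I. r T)" using T by (rule sup_ge)
      finally show "ereal B \<le> (SUP T\<in>I. r T)" .
    qed
    thus ?thesis by simp
  next
    case False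
    hence Ep: "0 < E" using E0 by auto
    have "E < E * exp 1" using Ep by simp
    then obtain T where T: "T \<in> I" and eT: "e T < E * exp 1"
      using cINF_less_iff[OF ne bdd] unfolding E by blast
    have epos: "0 < e T" using EleT[OF T] Ep by linarith
    show ?thesis
    proof (cases "s T = 0")
      case True
      hence "(SUP T\<in>I. r T) = \<infinity>" using sup_ge[OF T] by (simp add: rT)
      thus ?thesis by simp
    next
      case sF: False
      hence spos: "0 < s T" using s0[OF T] by linarith
      have "ln (s T) \<le> ln (2 * e T powr (1 - a))" using sU[OF T] spos by (subst ln_le_cancel_iff) auto
      also have "\<dots> = ln 2 + (1 - a) * ln (e T)" using epos by (simp add: ln_mult ln_powr)
      also have "(1 - a) * ln (e T) \<le> (1 - a) * (ln E + 1)"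
      proof -
        have "ln (e T) \<le> ln (E * exp 1)" using eT epos Ep by (subst ln_le_cancel_iff) auto
        also have "\<dots> = ln E + 1" using Ep by (simp add: ln_mult)
        finally show ?thesis using a by (intro mult_left_mono) auto
      qed
      finally have "ln (s T) \<le> ln 2 + (1 - a) * (ln E + 1)" by simp
      hence "- ln E - (ln 2 / (1 - a) + 1) \<le> ln (s T) / (a - 1)" using a
        unfolding am1 by (intro hC) auto
      hence "- ln E \<le> ln (s T) / (a - 1) + (ln 2 / (1 - a) + 1)" by linarith
      hence "- ln E \<le> ln (s T) / (a - 1) + C" using C2 by linarith
      hence "neg_log E \<le> r T + ereal C" using sF False by (simp add: rT neg_log_def)
      also have "\<dots> \<le> (SUP T\<in>I. r T) + ereal C" using sup_ge[OF T] by (rule add_right_mono)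
      finally show ?thesis .
    qed
  qed
  show ?thesis using part1 part2 by blast
qed

lemma seq_bound:
  fixes X Y :: "nat \<Rightarrow> ereal" and C :: real
  assumes "\<And>n. n \<ge> 1 \<Longrightarrow> X n \<le> Y n + ereal (C / real n)"
  shows "limsup X \<le> limsup Y \<and> liminf X \<le> liminf Y"
proof -
  have ev: "eventually (\<lambda>n. X n \<le> ereal (C / real n) + Y n) sequentially"
    using assms by (intro eventually_sequentiallyI[of 1]) (simp add: add.commute)
  have lim: "(\<lambda>n. ereal (C / real n)) \<longlonglongrightarrow> ereal 0"
    by (intro tendsto_ereal lim_const_over_n)
  have "limsup X \<le> limsup (\<lambda>n. ereal (C / real n) + Y n)"
    using ev by (rule Limsup_mono)
  also have "\<dots> = ereal 0 + limsup Y" using lim by (intro ereal_limsup_lim_add) auto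
  finally have 1: "limsup X \<le> limsup Y" by simp
  have "liminf X \<le> liminf (\<lambda>n. ereal (C / real n) + Y n)"
    using ev by (rule Liminf_mono)
  also have "\<dots> = ereal 0 + liminf Y" using lim by (intro ereal_liminf_lim_add) auto
  finally have 2: "liminf X \<le> liminf Y" by simp
  show ?thesis using 1 2 by simp
qed

lemma scale_bound:
  fixes D N :: ereal and C :: real and n :: nat
  assumes "D \<le> N + ereal C" "n \<ge> 1" "N \<noteq> - \<infinity>"
  shows "ereal (1 / real n) * D \<le> ereal (1 / real n) * N + ereal (C / real n)"
proof -
  have "ereal (1 / real n) * D \<le> ereal (1 / real n) * (N + ereal C)"
    using assms by (intro ereal_mult_left_mono) auto
  also have "\<dots> = ereal (1 / real n) * N + ereal (1 / real n) * ereal C"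
    using assms by (intro ereal_distrib_left) auto
  finally show ?thesis by simp
qed

lemma final_from_bounds:
  fixes D N :: "nat \<Rightarrow> ereal" and C :: real
  assumes b: "\<And>n. n \<ge> 1 \<Longrightarrow> D n \<le> N n + ereal C \<and> N n \<le> D n + ereal C"
    and nD: "\<And>n. D n \<noteq> - \<infinity>" and nN: "\<And>n. N n \<noteq> - \<infinity>"
  defines "L \<equiv> (\<lambda>n::nat. ereal (1 / real n) * D n)"
      and "R \<equiv> (\<lambda>n::nat. ereal (1 / real n) * N n)"
  shows "limsup L = limsup R \<and> liminf L = liminf R \<and>
         ((\<exists>l. L \<longlonglongrightarrow> l) \<longleftrightarrow> (\<exists>l. R \<longlonglongrightarrow> l)) \<and>
         (\<forall>l. L \<longlonglongrightarrow> l \<longrightarrow> R \<longlonglongrightarrow> l)"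
proof -
  have 1: "limsup L \<le> limsup R \<and> liminf L \<le> liminf R"
    using b nN unfolding L_def R_def by (intro seq_bound[where C=C] scale_bound) auto
  have 2: "limsup R \<le> limsup L \<and> liminf R \<le> liminf L"
    using b nD unfolding L_def R_def by (intro seq_bound[where C=C] scale_bound) auto
  have ls: "limsup L = limsup R" and li: "liminf L = liminf R" using 1 2 by auto
  have conv: "Y \<longlonglongrightarrow> l" if "X \<longlonglongrightarrow> l" "limsup X = limsup Y" "liminf X = liminf Y"
    for X Y :: "nat \<Rightarrow> ereal" and l
  proof -
    have "liminf X = l" "limsup X = l"
      using that(1) by (auto intro: lim_imp_Liminf lim_imp_Limsup)
    thus ?thesis using that by (intro Liminf_eq_Limsup) auto
  qed
  show ?thesis using ls li conv[of L _ R] conv[of R _ L] by metis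
qed

definition qf :: "nat \<Rightarrow> complex mat \<Rightarrow> (nat \<Rightarrow> complex) \<Rightarrow> complex" where
  "qf n A f = (\<Sum>i<n. \<Sum>j<n. A $$ (i, j) * f j * cnj (f i))"

lemma qf_eq:
  assumes "A \<in> carrier_mat n n" "v \<in> carrier_vec n"
  shows "(A *\<^sub>v v) \<bullet>c v = qf n A (\<lambda>i. v $ i)"
  using assms unfolding qf_def scalar_prod_def
  by (auto simp: scalar_prod_def atLeast0LessThan sum_distrib_left sum_distrib_right mult.assoc mult.commute mult.left_commute
        intro!: sum.cong)

lemma adjoint_index:
  assumes "A \<in> carrier_mat n n" "i < n" "j < n"
  shows "mat_adjoint A $$ (i, j) = cnj (A $$ (j, i))"
  using assms unfolding mat_adjoint_def by (simp add: mat_of_rows_def)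

lemma adjoint_carrier:
  assumes "A \<in> carrier_mat n n" shows "mat_adjoint A \<in> carrier_mat n n"
  using assms unfolding mat_adjoint_def by (simp add: mat_of_rows_def)

lemma psd_herm:
  assumes "psd n A" "i < n" "j < n"
  shows "A $$ (i, j) = cnj (A $$ (j, i))"
proof -
  have A: "A \<in> carrier_mat n n" and h: "A = mat_adjoint A" using assms unfolding psd_def by auto
  have "A $$ (i, j) = mat_adjoint A $$ (i, j)" using h by simp
  also have "\<dots> = cnj (A $$ (j, i))" using A assms by (simp add: adjoint_index)
  finally show ?thesis .
qed

lemma psd_qf:
  assumes "psd n A"
  shows "qf n A f \<in> \<real> \<and> 0 \<le> Re (qf n A f)"
proof -
  have A: "A \<in> carrier_mat n n" using assms unfolding psd_def by auto
  have v: "Matrix.vec n f \<in> carrier_vec n" by simp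
  have "qf n A f = qf n A (\<lambda>i. Matrix.vec n f $ i)" unfolding qf_def by (intro sum.cong) auto
  also have "\<dots> = (A *\<^sub>v Matrix.vec n f) \<bullet>c Matrix.vec n f" using qf_eq[OF A v] by simp
  finally show ?thesis using assms v unfolding psd_def by auto
qed

lemma psd_from_qf:
  assumes A: "A \<in> carrier_mat n n"
    and h: "\<And>i j. i < n \<Longrightarrow> j < n \<Longrightarrow> A $$ (i, j) = cnj (A $$ (j, i))"
    and q: "\<And>f. qf n A f \<in> \<real> \<and> 0 \<le> Re (qf n A f)"
  shows "psd n A"
proof -
  have "A = mat_adjoint A"
  proof (rule eq_matI)
    fix i j assume "i < dim_row (mat_adjoint A)" "j < dim_col (mat_adjoint A)"
    hence ij: "i < n" "j < n" using adjoint_carrier[OF A] by auto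
    show "A $$ (i, j) = mat_adjoint A $$ (i, j)" using adjoint_index[OF A ij] h[OF ij] by simp
  qed (use A adjoint_carrier[OF A] in auto)
  moreover have "(A *\<^sub>v v) \<bullet>c v \<in> \<real> \<and> 0 \<le> Re ((A *\<^sub>v v) \<bullet>c v)" if "v \<in> carrier_vec n" for v
    using qf_eq[OF A that] q by simp
  ultimately show ?thesis using A unfolding psd_def by auto
qed

lemma qf_shift:
  assumes h: "\<And>i j. i < n \<Longrightarrow> j < n \<Longrightarrow> A $$ (i, j) = cnj (A $$ (j, i))" and k: "k < n"
  shows "qf n A (\<lambda>j. f j - (if j = k then t else 0)) =
    qf n A f - t * (\<Sum>i<n. A $$ (i, k) * cnj (f i)) - cnj t * cnj (\<Sum>i<n. A $$ (i, k) * cnj (f i))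
    + t * cnj t * A $$ (k, k)"
proof -
  define d where "d j = (if j = k then t else 0)" for j
  have e: "A $$ (i, j) * (f j - d j) * cnj (f i - d i) =
      A $$ (i, j) * f j * cnj (f i) - A $$ (i, j) * d j * cnj (f i)
      - A $$ (i, j) * f j * cnj (d i) + A $$ (i, j) * d j * cnj (d i)" for i j
    by (simp add: algebra_simps)
  have s1: "(\<Sum>i<n. \<Sum>j<n. A $$ (i, j) * d j * cnj (f i)) = t * (\<Sum>i<n. A $$ (i, k) * cnj (f i))"
  proof -
    have "(\<Sum>j<n. A $$ (i, j) * d j * cnj (f i)) = A $$ (i, k) * cnj (f i) * t" for i
    proof -
      have "(\<Sum>j<n. A $$ (i, j) * d j * cnj (f i)) = (\<Sum>j<n. if j = k then A $$ (i, k) * cnj (f i) * t else 0)"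
        by (intro sum.cong) (auto simp: d_def)
      also have "\<dots> = A $$ (i, k) * cnj (f i) * t" using k by simp
      finally show ?thesis .
    qed
    hence "(\<Sum>i<n. \<Sum>j<n. A $$ (i, j) * d j * cnj (f i)) = (\<Sum>i<n. A $$ (i, k) * cnj (f i) * t)" by simp
    also have "\<dots> = t * (\<Sum>i<n. A $$ (i, k) * cnj (f i))" by (simp add: sum_distrib_left mult.commute)
    finally show ?thesis .
  qed
  have s2: "(\<Sum>i<n. \<Sum>j<n. A $$ (i, j) * f j * cnj (d i)) = cnj t * cnj (\<Sum>i<n. A $$ (i, k) * cnj (f i))"
  proof -
    have "(\<Sum>i<n. \<Sum>j<n. A $$ (i, j) * f j * cnj (d i)) = (\<Sum>i<n. if i = k then cnj t * (\<Sum>j<n. A $$ (k, j) * f j) else 0)"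
      by (intro sum.cong) (auto simp: d_def sum_distrib_left mult.commute mult.left_commute)
    also have "\<dots> = cnj t * (\<Sum>j<n. A $$ (k, j) * f j)" using k by simp
    also have "(\<Sum>j<n. A $$ (k, j) * f j) = (\<Sum>j<n. cnj (A $$ (j, k) * cnj (f j)))"
    proof (intro sum.cong refl)
      fix j assume "j \<in> {..<n}"
      hence "A $$ (k, j) = cnj (A $$ (j, k))" using h[OF k, of j] by simp
      thus "A $$ (k, j) * f j = cnj (A $$ (j, k) * cnj (f j))" by simp
    qed
    also have "\<dots> = cnj (\<Sum>i<n. A $$ (i, k) * cnj (f i))" by (simp add: cnj_sum)
    finally show ?thesis .
  qed
  have s3: "(\<Sum>i<n. \<Sum>j<n. A $$ (i, j) * d j * cnj (d i)) = t * cnj t * A $$ (k, k)"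
  proof -
    have inner: "(\<Sum>j<n. A $$ (i, j) * d j * cnj (d i)) = (if i = k then t * cnj t * A $$ (k, k) else 0)" for i
    proof (cases "i = k")
      case True
      have "(\<Sum>j<n. A $$ (i, j) * d j * cnj (d i)) = (\<Sum>j<n. if j = k then t * cnj t * A $$ (k, k) else 0)"
        using True by (intro sum.cong) (auto simp: d_def)
      also have "\<dots> = t * cnj t * A $$ (k, k)" using k by simp
      finally show ?thesis using True by simp
    qed (simp add: d_def)
    have "(\<Sum>i<n. \<Sum>j<n. A $$ (i, j) * d j * cnj (d i)) = (\<Sum>i<n. if i = k then t * cnj t * A $$ (k, k) else 0)"
      unfolding inner ..
    also have "\<dots> = t * cnj t * A $$ (k, k)" using k by simp
    finally show ?thesis .
  qed
  have X: "qf n A (\<lambda>j. f j - d j) = qf n A f - (\<Sum>i<n. \<Sum>j<n. A $$ (i, j) * d j * cnj (f i))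
     - (\<Sum>i<n. \<Sum>j<n. A $$ (i, j) * f j * cnj (d i)) + (\<Sum>i<n. \<Sum>j<n. A $$ (i, j) * d j * cnj (d i))"
    unfolding qf_def e by (simp add: sum_subtractf sum.distrib)
  have eqf: "qf n A (\<lambda>j. f j - (if j = k then t else 0)) = qf n A (\<lambda>j. f j - d j)" by (simp add: d_def)
  show ?thesis unfolding eqf X s1 s2 s3 ..
qed


lemma qf_unit:
  assumes "k < n" shows "qf n A (\<lambda>j. if j = k then 1 else 0) = A $$ (k, k)"
proof -
  have "qf n A (\<lambda>j. if j = k then 1 else 0) = (\<Sum>i<n. if i = k then (\<Sum>j<n. if j = k then A $$ (k, k) else 0) else 0)"
    unfolding qf_def
  proof (intro sum.cong refl)
    fix i assume "i \<in> {..<n}"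
    have "(\<Sum>j<n. A $$ (i, j) * (if j = k then 1 else 0) * cnj (if i = k then 1 else 0)) =
      (\<Sum>j<n. if j = k then (if i = k then A $$ (k, k) else 0) else 0)"
      by (intro sum.cong refl) auto
    also have "\<dots> = (if i = k then A $$ (k, k) else 0)" using assms by simp
    finally show "(\<Sum>j<n. A $$ (i, j) * (if j = k then 1 else 0) * cnj (if i = k then 1 else 0)) =
      (if i = k then \<Sum>j<n. if j = k then A $$ (k, k) else 0 else 0)" using assms by simp
  qed
  also have "\<dots> = A $$ (k, k)" using assms by simp
  finally show ?thesis .
qed

lemma psd_diag:
  assumes "psd n A" "k < n" shows "A $$ (k, k) \<in> \<real> \<and> 0 \<le> Re (A $$ (k, k))"
  using psd_qf[OF assms(1), of "\<lambda>j. if j = k then 1 else 0"] qf_unit[OF assms(2), of A] by simp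

lemma psd_zero_col:
  assumes A: "psd n A" and k: "k < n" and a0: "A $$ (k, k) = 0" and i: "i < n"
  shows "A $$ (i, k) = 0"
proof (rule ccontr)
  assume nz: "A $$ (i, k) \<noteq> 0"
  define z where "z = A $$ (i, k)"
  define f where "f j = (if j = i then (1::complex) else 0)" for j
  define q where "q = qf n A f"
  define w where "w = (Re z)^2 + (Im z)^2"
  have wpos: "0 < w" using nz unfolding w_def z_def
    by (metis complex_eq_0 not_less_iff_gr_or_eq sum_power2_gt_zero_iff)
  define s where "s = (Re q + 1) / (2 * w)"
  define t where "t = complex_of_real s * cnj z"
  have h: "\<And>i j. i < n \<Longrightarrow> j < n \<Longrightarrow> A $$ (i, j) = cnj (A $$ (j, i))" using psd_herm[OF A] by blast
  have zs: "(\<Sum>l<n. A $$ (l, k) * cnj (f l)) = z"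
  proof -
    have "(\<Sum>l<n. A $$ (l, k) * cnj (f l)) = (\<Sum>l<n. if l = i then z else 0)"
      unfolding f_def z_def by (intro sum.cong) auto
    thus ?thesis using i by simp
  qed
  have tz: "t * z = complex_of_real (s * w)"
    unfolding t_def w_def using complex_mult_cnj[of z] by (simp add: mult.commute mult.left_commute)
  have "qf n A (\<lambda>j. f j - (if j = k then t else 0)) = q - t * z - cnj (t * z)"
    using qf_shift[OF h k, of f t] unfolding zs a0 q_def by simp
  also have "\<dots> = q - 2 * complex_of_real (s * w)" unfolding tz by simp
  finally have eq: "Re (qf n A (\<lambda>j. f j - (if j = k then t else 0))) = Re q - 2 * (s * w)" by simp
  have "2 * (s * w) = Re q + 1" unfolding s_def using wpos by simp
  hence "Re (qf n A (\<lambda>j. f j - (if j = k then t else 0))) < 0" using eq by linarith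
  thus False using psd_qf[OF A] by (meson not_le)
qed


lemma outer_qf:
  fixes c :: "nat \<Rightarrow> complex" and a :: complex
  shows "(\<Sum>i<n. \<Sum>j<n. (c i * cnj (c j) / a) * f j * cnj (f i)) =
     (\<Sum>i<n. c i * cnj (f i)) * cnj (\<Sum>i<n. c i * cnj (f i)) / a"
  by (simp add: cnj_sum sum_product sum_divide_distrib mult_ac)

lemma chol_induct:
  assumes "k \<le> n"
  shows "\<forall>A. psd n A \<and> (\<forall>i<n. \<forall>j<n. (i < k \<or> j < k) \<longrightarrow> A $$ (i, j) = 0) \<longrightarrow>
     (\<exists>us. \<forall>i<n. \<forall>j<n. A $$ (i, j) = (\<Sum>u\<leftarrow>us. u i * cnj (u j)))"
  using assms
proof (induction k rule: inc_induct)
  case base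
  show ?case
  proof (intro allI impI)
    fix A assume "psd n A \<and> (\<forall>i<n. \<forall>j<n. (i < n \<or> j < n) \<longrightarrow> A $$ (i, j) = 0)"
    thus "\<exists>us. \<forall>i<n. \<forall>j<n. A $$ (i, j) = (\<Sum>u\<leftarrow>us. u i * cnj (u j))"
      by (intro exI[of _ "[]"]) auto
  qed
next
  case (step k)
  show ?case
  proof (intro allI impI)
    fix A assume asm: "psd n A \<and> (\<forall>i<n. \<forall>j<n. (i < k \<or> j < k) \<longrightarrow> A $$ (i, j) = 0)"
    hence A: "psd n A" and z: "\<And>i j. i < n \<Longrightarrow> j < n \<Longrightarrow> i < k \<or> j < k \<Longrightarrow> A $$ (i, j) = 0" by auto
    have Ac: "A \<in> carrier_mat n n" using A unfolding psd_def by auto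
    have h: "\<And>i j. i < n \<Longrightarrow> j < n \<Longrightarrow> A $$ (i, j) = cnj (A $$ (j, i))" using psd_herm[OF A] by blast
    have kn: "k < n" using step by auto
    define a where "a = A $$ (k, k)"
    have areal: "a \<in> \<real>" and are: "0 \<le> Re a" using psd_diag[OF A kn] unfolding a_def by auto
    have acnj: "cnj a = a" using areal by (simp add: Reals_cnj_iff)
    show "\<exists>us. \<forall>i<n. \<forall>j<n. A $$ (i, j) = (\<Sum>u\<leftarrow>us. u i * cnj (u j))"
    proof (cases "a = 0")
      case True
      have col: "A $$ (i, k) = 0" if "i < n" for i using psd_zero_col[OF A kn _ that] True unfolding a_def by simp
      have row: "A $$ (k, j) = 0" if "j < n" for j using h[OF kn that] col[OF that] by simp
      have "\<forall>i<n. \<forall>j<n. (i < Suc k \<or> j < Suc k) \<longrightarrow> A $$ (i, j) = 0"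
      proof (intro allI impI)
        fix i j assume "i < n" "j < n" "i < Suc k \<or> j < Suc k"
        hence "i < k \<or> j < k \<or> i = k \<or> j = k" by auto
        thus "A $$ (i, j) = 0"
        proof (elim disjE)
          assume "i < k" thus ?thesis using z[of i j] \<open>i < n\<close> \<open>j < n\<close> by simp
        next
          assume "j < k" thus ?thesis using z[of i j] \<open>i < n\<close> \<open>j < n\<close> by simp
        next
          assume "i = k" thus ?thesis using row[of j] \<open>j < n\<close> by simp
        next
          assume "j = k" thus ?thesis using col[of i] \<open>i < n\<close> by simp
        qed
      qed
      thus ?thesis using step.IH[rule_format, OF conjI[OF A]] by simp
    next
      case False
      define c :: "nat \<Rightarrow> complex" where "c i = A $$ (i, k)" for i
      define B where "B = Matrix.mat n n (\<lambda>(i, j). A $$ (i, j) - c i * cnj (c j) / a)"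
      have Bc: "B \<in> carrier_mat n n" unfolding B_def by simp
      have Bij: "B $$ (i, j) = A $$ (i, j) - c i * cnj (c j) / a" if "i < n" "j < n" for i j
        unfolding B_def using that by simp
      have Bh: "B $$ (i, j) = cnj (B $$ (j, i))" if "i < n" "j < n" for i j
        using that h[OF that] by (simp add: Bij acnj)
      have Bq: "qf n B f \<in> \<real> \<and> 0 \<le> Re (qf n B f)" for f
      proof -
        define zz where "zz = (\<Sum>i<n. A $$ (i, k) * cnj (f i))"
        have "qf n B f = (\<Sum>i<n. \<Sum>j<n. A $$ (i, j) * f j * cnj (f i) - (c i * cnj (c j) / a) * f j * cnj (f i))"
          unfolding qf_def by (intro sum.cong refl) (simp add: Bij algebra_simps)
        also have "\<dots> = qf n A f - zz * cnj zz / a"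
          unfolding qf_def sum_subtractf outer_qf zz_def c_def ..
        also have "\<dots> = qf n A (\<lambda>j. f j - (if j = k then cnj zz / a else 0))"
        proof -
          have "qf n A (\<lambda>j. f j - (if j = k then cnj zz / a else 0)) =
            qf n A f - (cnj zz / a) * zz - cnj (cnj zz / a) * cnj zz + (cnj zz / a) * cnj (cnj zz / a) * a"
            using qf_shift[OF h kn, of f "cnj zz / a"] unfolding zz_def a_def by simp
          also have "\<dots> = qf n A f - zz * cnj zz / a" using False by (simp add: acnj field_simps)
          finally show ?thesis by simp
        qed
        finally show ?thesis using psd_qf[OF A] by simp
      qed
      have Bpsd: "psd n B" by (rule psd_from_qf[OF Bc Bh Bq])
      have Bz: "\<forall>i<n. \<forall>j<n. (i < Suc k \<or> j < Suc k) \<longrightarrow> B $$ (i, j) = 0"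
      proof (intro allI impI)
        fix i j assume ij: "i < n" "j < n" "i < Suc k \<or> j < Suc k"
        show "B $$ (i, j) = 0"
        proof (cases "i < k \<or> j < k")
          case True
          hence "A $$ (i, j) = 0" using z[of i j] ij by simp
          moreover have "c i * cnj (c j) = 0"
          proof (cases "i < k")
            case True thus ?thesis using z[of i k] ij kn unfolding c_def by simp
          next
            case False hence "j < k" using \<open>i < k \<or> j < k\<close> by simp
            thus ?thesis using z[of j k] ij kn unfolding c_def by simp
          qed
          ultimately show ?thesis using Bij ij by simp
        next
          case nf: False
          hence "i = k \<or> j = k" using ij by auto
          thus ?thesis
          proof
            assume "i = k"
            thus ?thesis using Bij[OF ij(1,2)] h[OF ij(2) kn] False unfolding c_def by (simp add: a_def[symmetric])
          next
            assume "j = k"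
            thus ?thesis using Bij[OF ij(1,2)] False unfolding c_def by (simp add: a_def[symmetric] acnj)
          qed
        qed
      qed
      obtain us where us: "\<forall>i<n. \<forall>j<n. B $$ (i, j) = (\<Sum>u\<leftarrow>us. u i * cnj (u j))"
        using step.IH[rule_format, OF conjI[OF Bpsd Bz]] by blast
      define r where "r = sqrt (Re a)"
      obtain ra where ra: "a = complex_of_real ra" using areal by (auto elim: Reals_cases)
      have apos: "0 < Re a" using are False unfolding ra by auto
      have a_eq: "a = complex_of_real (r * r)" unfolding r_def using apos unfolding ra by simp
      define u0 :: "nat \<Rightarrow> complex" where "u0 i = c i / complex_of_real r" for i
      have "\<forall>i<n. \<forall>j<n. A $$ (i, j) = (\<Sum>u\<leftarrow>u0 # us. u i * cnj (u j))"
      proof (intro allI impI)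
        fix i j assume "i < n" "j < n"
        have p: "u0 i * cnj (u0 j) = c i * cnj (c j) / a" unfolding u0_def a_eq by simp
        have e1: "B $$ (i, j) = (\<Sum>u\<leftarrow>us. u i * cnj (u j))" using us \<open>i < n\<close> \<open>j < n\<close> by blast
        have e2: "A $$ (i, j) = c i * cnj (c j) / a + B $$ (i, j)" using Bij[OF \<open>i < n\<close> \<open>j < n\<close>] by simp
        show "A $$ (i, j) = (\<Sum>u\<leftarrow>u0 # us. u i * cnj (u j))"
          unfolding e2 e1 p[symmetric] by simp
      qed
      thus ?thesis by blast
    qed
  qed
qed

lemma psd_decomp:
  assumes "psd n A"
  shows "\<exists>us. \<forall>i<n. \<forall>j<n. A $$ (i, j) = (\<Sum>u\<leftarrow>us. u i * cnj (u j))"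
  using chol_induct[of 0 n] assms by auto

definition repr :: "(nat \<Rightarrow> complex) list \<Rightarrow> complex mat \<Rightarrow> nat \<Rightarrow> bool" where
  "repr us A n \<longleftrightarrow> A \<in> carrier_mat n n \<and> (\<forall>i<n. \<forall>j<n. A $$ (i, j) = (\<Sum>u\<leftarrow>us. u i * cnj (u j)))"

lemma kron_carrier:
  assumes "A \<in> carrier_mat p p" "B \<in> carrier_mat q q"
  shows "kron A B \<in> carrier_mat (p * q) (p * q)"
  using assms unfolding kron_def by auto

lemma kron_index:
  assumes "A \<in> carrier_mat p p" "B \<in> carrier_mat q q" "i < p * q" "j < p * q"
  shows "kron A B $$ (i, j) = A $$ (i div q, j div q) * B $$ (i mod q, j mod q)"
  using assms unfolding kron_def by auto

lemma sum_list_concat_map: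
  "(\<Sum>x\<leftarrow>concat (map (\<lambda>u. map (h u) ws) us). F x) = (\<Sum>u\<leftarrow>us. \<Sum>w\<leftarrow>ws. F (h u w))"
  by (induction us) (simp_all add: comp_def)

lemma sum_list_prod:
  fixes a b :: "_ \<Rightarrow> complex"
  shows "(\<Sum>u\<leftarrow>us. a u) * (\<Sum>w\<leftarrow>ws. b w) = (\<Sum>u\<leftarrow>us. \<Sum>w\<leftarrow>ws. a u * b w)"
  by (induction us) (simp_all add: distrib_right sum_list_const_mult)

lemma repr_kron:
  assumes A: "repr us A p" and B: "repr ws B q"
  shows "repr (concat (map (\<lambda>u. map (\<lambda>w i. u (i div q) * w (i mod q)) ws) us)) (kron A B) (p * q)"
proof -
  have Ac: "A \<in> carrier_mat p p" and Bc: "B \<in> carrier_mat q q" using A B unfolding repr_def by auto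
  have "kron A B $$ (i, j) = (\<Sum>x\<leftarrow>concat (map (\<lambda>u. map (\<lambda>w i. u (i div q) * w (i mod q)) ws) us). x i * cnj (x j))"
    if ij: "i < p * q" "j < p * q" for i j
  proof -
    have qpos: "0 < q" using ij by (cases q) auto
    have d: "i div q < p" "j div q < p" using ij by (auto intro: less_mult_imp_div_less)
    have m: "i mod q < q" "j mod q < q" using qpos by auto
    have "kron A B $$ (i, j) = A $$ (i div q, j div q) * B $$ (i mod q, j mod q)"
      using kron_index[OF Ac Bc ij] .
    also have "\<dots> = (\<Sum>u\<leftarrow>us. u (i div q) * cnj (u (j div q))) * (\<Sum>w\<leftarrow>ws. w (i mod q) * cnj (w (j mod q)))"
      using A B d m unfolding repr_def by simp
    also have "\<dots> = (\<Sum>u\<leftarrow>us. \<Sum>w\<leftarrow>ws. (u (i div q) * w (i mod q)) * cnj (u (j div q) * w (j mod q)))"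
      unfolding sum_list_prod by (simp add: mult_ac)
    also have "\<dots> = (\<Sum>x\<leftarrow>concat (map (\<lambda>u. map (\<lambda>w i. u (i div q) * w (i mod q)) ws) us). x i * cnj (x j))"
      unfolding sum_list_concat_map by simp
    finally show ?thesis .
  qed
  thus ?thesis unfolding repr_def using kron_carrier[OF Ac Bc] by auto
qed

lemma repr_tpow:
  assumes "repr us A d"
  shows "\<exists>vs. repr vs (tpow A n) (d ^ n)"
proof (induction n)
  case 0
  have "repr [\<lambda>i. 1] (1\<^sub>m 1) 1" unfolding repr_def by auto
  thus ?case by auto
next
  case (Suc n)
  then obtain vs where vs: "repr vs (tpow A n) (d ^ n)" by blast
  show ?case unfolding tpow.simps power_Suc2 using repr_kron[OF vs assms] by blast
qed

lemma sum_list_sum_swap: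
  "(\<Sum>i\<in>S. \<Sum>u\<leftarrow>us. g u i) = (\<Sum>u\<leftarrow>us. \<Sum>i\<in>S. g u i)"
  by (induction us) (simp_all add: sum.distrib)

lemma sum_list_Re_nonneg:
  assumes "\<And>u. u \<in> set us \<Longrightarrow> 0 \<le> Re (g u)"
  shows "0 \<le> Re (\<Sum>u\<leftarrow>us. g u)"
  using assms by (induction us) auto

lemma mtrace_mult_index:
  assumes "A \<in> carrier_mat m m" "T \<in> carrier_mat m m"
  shows "mtrace (A * T) = (\<Sum>i<m. \<Sum>j<m. A $$ (i, j) * T $$ (j, i))"
  using assms unfolding mtrace_def
  by (auto simp: scalar_prod_def atLeast0LessThan intro!: sum.cong)

lemma trace_nonneg:
  assumes A: "repr us A m" and T: "psd m T"
  shows "0 \<le> Re (mtrace (A * T))"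
proof -
  have Ac: "A \<in> carrier_mat m m" using A unfolding repr_def by auto
  have Tc: "T \<in> carrier_mat m m" using T unfolding psd_def by auto
  have "mtrace (A * T) = (\<Sum>i<m. \<Sum>j<m. (\<Sum>u\<leftarrow>us. u i * cnj (u j)) * T $$ (j, i))"
    unfolding mtrace_mult_index[OF Ac Tc] using A unfolding repr_def by (auto intro!: sum.cong)
  also have "\<dots> = (\<Sum>i<m. \<Sum>j<m. \<Sum>u\<leftarrow>us. T $$ (j, i) * u i * cnj (u j))"
    by (simp add: sum_list_mult_const[symmetric] sum_list_const_mult[symmetric] mult_ac)
  also have "\<dots> = (\<Sum>u\<leftarrow>us. \<Sum>i<m. \<Sum>j<m. T $$ (j, i) * u i * cnj (u j))"
    by (simp add: sum_list_sum_swap)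
  also have "\<dots> = (\<Sum>u\<leftarrow>us. qf m T u)"
    unfolding qf_def by (subst sum.swap) simp
  finally show ?thesis using psd_qf[OF T] by (simp add: sum_list_Re_nonneg)
qed

lemma sum_div_mod:
  fixes g :: "nat \<Rightarrow> nat \<Rightarrow> 'a :: comm_monoid_add"
  shows "(\<Sum>i<p * q. g (i div q) (i mod q)) = (\<Sum>a<p. \<Sum>b<q. g a b)"
proof (induction p)
  case 0 thus ?case by simp
next
  case (Suc p)
  have "(\<Sum>i<Suc p * q. g (i div q) (i mod q)) =
     (\<Sum>i\<in>{0..<p * q}. g (i div q) (i mod q)) + (\<Sum>i\<in>{p * q..<p * q + q}. g (i div q) (i mod q))"
    by (subst sum.atLeastLessThan_concat) (auto simp: atLeast0LessThan add.commute)
  also have "(\<Sum>i\<in>{p * q..<p * q + q}. g (i div q) (i mod q)) = (\<Sum>b<q. g p b)"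
  proof -
    have "(\<Sum>i\<in>{p * q..<p * q + q}. g (i div q) (i mod q)) = (\<Sum>b\<in>{0..<q}. g ((b + p * q) div q) ((b + p * q) mod q))"
      using sum.shift_bounds_nat_ivl[of "\<lambda>i. g (i div q) (i mod q)" 0 "p * q" q] by (simp add: add.commute)
    also have "\<dots> = (\<Sum>b<q. g p b)"
      by (auto simp: atLeast0LessThan intro!: sum.cong)
    finally show ?thesis .
  qed
  finally show ?case using Suc by (simp add: atLeast0LessThan)
qed

lemma trace_kron:
  assumes "A \<in> carrier_mat p p" "B \<in> carrier_mat q q"
  shows "mtrace (kron A B) = mtrace A * mtrace B"
proof -
  have "mtrace (kron A B) = (\<Sum>i<p * q. A $$ (i div q, i div q) * B $$ (i mod q, i mod q))"
    unfolding mtrace_def using kron_carrier[OF assms] kron_index[OF assms]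
    by (intro sum.cong) auto
  also have "\<dots> = (\<Sum>a<p. \<Sum>b<q. A $$ (a, a) * B $$ (b, b))"
    by (rule sum_div_mod)
  also have "\<dots> = mtrace A * mtrace B"
    unfolding mtrace_def using assms by (simp add: sum_product)
  finally show ?thesis .
qed

lemma tpow_carrier:
  assumes "A \<in> carrier_mat d d" shows "tpow A n \<in> carrier_mat (d ^ n) (d ^ n)"
proof (induction n)
  case (Suc n) show ?case unfolding tpow.simps power_Suc2 by (rule kron_carrier[OF Suc assms])
qed simp

lemma trace_tpow:
  assumes "A \<in> carrier_mat d d" "mtrace A = 1" shows "mtrace (tpow A n) = 1"
proof (induction n)
  case 0 thus ?case by (simp add: mtrace_def)
next
  case (Suc n)
  thus ?case using trace_kron[OF tpow_carrier[OF assms(1), of n] assms(1)] assms(2) by simp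
qed

lemma trace_minus:
  assumes "A \<in> carrier_mat m m" "T \<in> carrier_mat m m"
  shows "mtrace (A * (1\<^sub>m m - T)) = mtrace A - mtrace (A * T)"
proof -
  have "A * (1\<^sub>m m - T) = A - A * T" using mult_minus_distrib_mat[OF assms(1) one_carrier_mat assms(2)] assms(1) by simp
  thus ?thesis unfolding mtrace_def using assms by (simp add: sum_subtractf)
qed


lemma psd_one: "psd m (1\<^sub>m m)"
proof (rule psd_from_qf)
  show "1\<^sub>m m \<in> carrier_mat m m" by simp
  show "1\<^sub>m m $$ (i, j) = cnj (1\<^sub>m m $$ (j, i))" if "i < m" "j < m" for i j using that by simp
  fix f :: "nat \<Rightarrow> complex"
  have "qf m (1\<^sub>m m) f = (\<Sum>i<m. f i * cnj (f i))"
  proof -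
    have "qf m (1\<^sub>m m) f = (\<Sum>i<m. \<Sum>j<m. if j = i then f i * cnj (f i) else 0)"
      unfolding qf_def by (intro sum.cong refl) auto
    thus ?thesis by simp
  qed
  also have "\<dots> = complex_of_real (\<Sum>i<m. (Re (f i))^2 + (Im (f i))^2)"
    by (simp add: complex_mult_cnj)
  finally show "qf m (1\<^sub>m m) f \<in> \<real> \<and> 0 \<le> Re (qf m (1\<^sub>m m) f)"
    by (simp add: sum_nonneg)
qed

lemma psd_zero: "psd m (0\<^sub>m m m)"
proof (rule psd_from_qf)
  fix f :: "nat \<Rightarrow> complex"
  have "qf m (0\<^sub>m m m) f = 0" unfolding qf_def by (intro sum.neutral) auto
  thus "qf m (0\<^sub>m m m) f \<in> \<real> \<and> 0 \<le> Re (qf m (0\<^sub>m m m) f)" by simp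
qed auto

lemma one_minus_one_minus:
  fixes T :: "complex mat"
  assumes "T \<in> carrier_mat m m" shows "1\<^sub>m m - (1\<^sub>m m - T) = T"
  using assms by (intro eq_matI) auto

lemma test_compl:
  assumes "is_test m T" shows "is_test m (1\<^sub>m m - T)"
proof -
  have Tc: "T \<in> carrier_mat m m" using assms unfolding is_test_def psd_def by auto
  show ?thesis using assms unfolding is_test_def one_minus_one_minus[OF Tc] by auto
qed

lemma density_repr:
  assumes "density d \<rho>"
  shows "\<exists>vs. repr vs (tpow \<rho> n) (d ^ n)" "tpow \<rho> n \<in> carrier_mat (d ^ n) (d ^ n)" "mtrace (tpow \<rho> n) = 1"
proof -
  have p: "psd d \<rho>" and t: "mtrace \<rho> = 1" using assms unfolding density_def by auto
  have c: "\<rho> \<in> carrier_mat d d" using p unfolding psd_def by auto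
  obtain us where "\<forall>i<d. \<forall>j<d. \<rho> $$ (i, j) = (\<Sum>u\<leftarrow>us. u i * cnj (u j))" using psd_decomp[OF p] by blast
  hence "repr us \<rho> d" using c unfolding repr_def by auto
  thus "\<exists>vs. repr vs (tpow \<rho> n) (d ^ n)" by (rule repr_tpow)
  show "tpow \<rho> n \<in> carrier_mat (d ^ n) (d ^ n)" by (rule tpow_carrier[OF c])
  show "mtrace (tpow \<rho> n) = 1" by (rule trace_tpow[OF c t])
qed

lemma per_n_bound:
  fixes d :: nat and \<rho> \<sigma> :: "complex mat" and \<alpha> :: real
  assumes dr: "density d \<rho>" and ds: "density d \<sigma>" and a: "0 < \<alpha>" "\<alpha> < 1"
  defines "C \<equiv> (ln 4 + ln 2) / (1 - \<alpha>) + 1"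
  shows "D_test \<alpha> (d ^ n) (tpow \<rho> n) (tpow \<sigma> n) \<le> neg_log (err_min \<alpha> (d ^ n) (tpow \<rho> n) (tpow \<sigma> n)) + ereal C \<and>
         neg_log (err_min \<alpha> (d ^ n) (tpow \<rho> n) (tpow \<sigma> n)) \<le> D_test \<alpha> (d ^ n) (tpow \<rho> n) (tpow \<sigma> n) + ereal C"
proof -
  define m where "m = d ^ n"
  define P where "P = tpow \<rho> n"
  define S where "S = tpow \<sigma> n"
  obtain vP where vP: "repr vP P m" using density_repr(1)[OF dr, of n] unfolding P_def m_def by blast
  obtain vS where vS: "repr vS S m" using density_repr(1)[OF ds, of n] unfolding S_def m_def by blast
  have Pc: "P \<in> carrier_mat m m" and Sc: "S \<in> carrier_mat m m"
    using density_repr(2)[OF dr, of n] density_repr(2)[OF ds, of n] unfolding P_def S_def m_def by auto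
  have Pt: "mtrace P = 1" and St: "mtrace S = 1"
    using density_repr(3)[OF dr, of n] density_repr(3)[OF ds, of n] unfolding P_def S_def by auto
  define I where "I = {T. is_test m T}"
  define x where "x T = Re (mtrace (P * (1\<^sub>m m - T)))" for T
  define y where "y T = Re (mtrace (S * T))" for T
  define c where "c T = 1\<^sub>m m - T" for T :: "complex mat"
  have Tc: "T \<in> carrier_mat m m" if "T \<in> I" for T using that unfolding I_def is_test_def psd_def by auto
  have xc: "Re (mtrace (P * T)) = 1 - x T" if "T \<in> I" for T
    unfolding x_def trace_minus[OF Pc Tc[OF that]] Pt by simp
  have yc: "Re (mtrace (S * (1\<^sub>m m - T))) = 1 - y T" if "T \<in> I" for T
    unfolding y_def trace_minus[OF Sc Tc[OF that]] St by simp
  have ne: "I \<noteq> {}"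
  proof -
    have "is_test m (0\<^sub>m m m)" unfolding is_test_def
    proof -
      have "1\<^sub>m m - 0\<^sub>m m m = (1\<^sub>m m :: complex mat)" by (intro eq_matI) auto
      thus "psd m (0\<^sub>m m m) \<and> psd m (1\<^sub>m m - 0\<^sub>m m m)" using psd_zero[of m] psd_one[of m] by simp
    qed
    thus ?thesis unfolding I_def by blast
  qed
  have rng: "0 \<le> x T \<and> x T \<le> 1 \<and> 0 \<le> y T \<and> y T \<le> 1" if T: "T \<in> I" for T
  proof -
    have t1: "psd m T" and t2: "psd m (1\<^sub>m m - T)" using T unfolding I_def is_test_def by auto
    have "0 \<le> x T" unfolding x_def by (rule trace_nonneg[OF vP t2])
    moreover have "0 \<le> Re (mtrace (P * T))" by (rule trace_nonneg[OF vP t1])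
    moreover have "0 \<le> y T" unfolding y_def by (rule trace_nonneg[OF vS t1])
    moreover have "0 \<le> Re (mtrace (S * (1\<^sub>m m - T)))" by (rule trace_nonneg[OF vS t2])
    ultimately show ?thesis using xc[OF T] yc[OF T] by linarith
  qed
  have cmp: "c T \<in> I \<and> x (c T) = 1 - x T \<and> y (c T) = 1 - y T" if T: "T \<in> I" for T
  proof -
    have "c T \<in> I" using T test_compl unfolding I_def c_def by auto
    moreover have "x (c T) = 1 - x T" unfolding x_def c_def one_minus_one_minus[OF Tc[OF T]]
      using xc[OF T] unfolding x_def by simp
    moreover have "y (c T) = 1 - y T" unfolding c_def using yc[OF T] unfolding y_def by simp
    ultimately show ?thesis by blast
  qed
  note ab = abstract_bound[OF ne rng cmp a]
  have Dq: "D_test \<alpha> m P S = (SUP T\<in>I. (let s = (1 - x T) powr \<alpha> * y T powr (1 - \<alpha>) + x T powr \<alpha> * (1 - y T) powr (1 - \<alpha>)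
      in if s = 0 then \<infinity> else ereal (ln s / (\<alpha> - 1))))"
    unfolding D_test_def I_def[symmetric]
  proof (rule SUP_cong[OF refl])
    fix T assume T: "T \<in> I"
    have tm: "test_map m T P True = 1 - x T" "test_map m T P False = x T"
      "test_map m T S True = y T" "test_map m T S False = 1 - y T"
      unfolding test_map_def using xc[OF T] yc[OF T] by (auto simp: x_def y_def)
    show "renyi \<alpha> (test_map m T P) (test_map m T S) = (let s = (1 - x T) powr \<alpha> * y T powr (1 - \<alpha>) + x T powr \<alpha> * (1 - y T) powr (1 - \<alpha>)
      in if s = 0 then \<infinity> else ereal (ln s / (\<alpha> - 1)))"
      unfolding renyi_def UNIV_bool by (simp add: tm add.commute)
  qed
  have Eq: "err_min \<alpha> m P S = (INF T\<in>I. x T powr (\<alpha> / (1 - \<alpha>)) + y T)"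
    unfolding err_min_def I_def x_def y_def ..
  show ?thesis using ab unfolding Dq[symmetric] Eq[symmetric] C_def m_def P_def S_def by simp
qed

theorem mainTheorem7:
  fixes d :: nat and \<rho> \<sigma> :: "complex mat" and \<alpha> :: real
  assumes "density d \<rho>" and "density d \<sigma>" and "0 < \<alpha>" and "\<alpha> < 1"
  defines "L \<equiv> (\<lambda>n::nat. ereal (1 / real n) * D_test \<alpha> (d ^ n) (tpow \<rho> n) (tpow \<sigma> n))"
      and "R \<equiv> (\<lambda>n::nat. ereal (1 / real n) * neg_log (err_min \<alpha> (d ^ n) (tpow \<rho> n) (tpow \<sigma> n)))"
  shows "limsup L = limsup R \<and> liminf L = liminf R \<and>
         ((\<exists>l. L \<longlonglongrightarrow> l) \<longleftrightarrow> (\<exists>l. R \<longlonglongrightarrow> l)) \<and>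
         (\<forall>l. L \<longlonglongrightarrow> l \<longrightarrow> R \<longlonglongrightarrow> l)"
proof -
  define C where "C = (ln 4 + ln 2) / (1 - \<alpha>) + 1"
  define D where "D n = D_test \<alpha> (d ^ n) (tpow \<rho> n) (tpow \<sigma> n)" for n
  define N where "N n = neg_log (err_min \<alpha> (d ^ n) (tpow \<rho> n) (tpow \<sigma> n))" for n
  have b: "D n \<le> N n + ereal C \<and> N n \<le> D n + ereal C" for n
    using per_n_bound[OF assms(1-4), of n] unfolding D_def N_def C_def by simp
  have nN: "N n \<noteq> - \<infinity>" for n unfolding N_def neg_log_def by simp
  have nD: "D n \<noteq> - \<infinity>" for n
  proof
    assume "D n = - \<infinity>"
    hence "N n \<le> - \<infinity>" using b[of n] by simp
    thus False using nN[of n] by simp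
  qed
  have "L = (\<lambda>n. ereal (1 / real n) * D n)" "R = (\<lambda>n. ereal (1 / real n) * N n)"
    unfolding L_def R_def D_def N_def by auto
  thus ?thesis using final_from_bounds[of D N C] b nD nN by simp
qed

end
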